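(* For all integers $m\ge 2$ and $n\ge 2$ there exists a proportional mechanism $(A,p)$ for the job scheduling problem over the set $\mathcal{C}$ of general instances with $m$ machines and $n$ jobs such that $A$ gives a $3/2$-approximation to the optimal makespan, i.e. $\max_{i\in[m]} c_i(A(c)_i)\le \tfrac32\,\mathrm{OPT}(c)$ for every $c\in\mathcal{C}$.
   Context: Notation: $[k]=\{1,\dots,k\}$. There are $m$ machines $[m]$ and $n$ jobs $[n]$. An instance is a matrix $c\in\mathbb{R}_{\ge0}^{m\times n}$, where $c_{i,j}$ is the cost (processing time) of job $j$ on machine $i$; for $S\subseteq[n]$, $c_i(S)=\sum_{j\in S}c_{i,j}$. The set of general instances is $\mathcal{C}=\mathbb{R}_{\ge0}^{m\times n}$. An allocation is a tuple $(X_1,\dots,X_m)$ of pairwise disjoint subsets of $[n]$ whose union is $[n]$. A mechanism $(A,p)$ over a set of instances $\mathcal{I}$ assigns to each $c\in\mathcal{I}$ an allocation $A(c)=(A(c)_1,\dots,A(c)_m)$ and payments $p(c)=(p(c)_1,\dots,p(c)_m)\in\mathbb{R}^m$ (written $A_i,p_i$ when $c$ is clear). The mechanism is proportional if for every $c\in\mathcal{I}$ and every $i\in[m]$: $c_i(A_i)-p_i\le \frac1m\sum_{j\in[m]}\big(c_i(A_j)-p_j\big)$. $\mathrm{OPT}(c)=\min_X\max_{i\in[m]}c_i(X_i)$ over all allocations $X$. An allocation function $A$ over $\mathcal{I}$ gives a $\beta$-approximation to the optimal makespan ($\beta\ge1$) if $\max_{i\in[m]}c_i(A(c)_i)\le\beta\,\mathrm{OPT}(c)$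 for all $c\in\mathcal{I}$. *)

theory Defs
  imports Complex_Main
begin

text \<open>Machines are 0..<m, jobs are 0..<n. An instance is c :: nat => nat => real,
  c i j = cost of job j on machine i; only entries with i < m, j < n matter.\<close>

type_synonym inst = "nat \<Rightarrow> nat \<Rightarrow> real"

definition is_instance :: "nat \<Rightarrow> nat \<Rightarrow> inst \<Rightarrow> bool" where
  "is_instance m n c \<longleftrightarrow> (\<forall>i<m. \<forall>j<n. 0 \<le> c i j)"

definition cost :: "inst \<Rightarrow> nat \<Rightarrow> nat set \<Rightarrow> real" where
  "cost c i S = (\<Sum>j\<in>S. c i j)"

definition is_allocation :: "nat \<Rightarrow> nat \<Rightarrow> (nat \<Rightarrow> nat set) \<Rightarrow> bool" where
  "is_allocation m n X \<longleftrightarrow>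
     (\<forall>i<m. \<forall>k<m. i \<noteq> k \<longrightarrow> X i \<inter> X k = {}) \<and> (\<Union>i<m. X i) = {..<n}"

definition makespan :: "nat \<Rightarrow> inst \<Rightarrow> (nat \<Rightarrow> nat set) \<Rightarrow> real" where
  "makespan m c X = (MAX i\<in>{..<m}. cost c i (X i))"

definition OPT :: "nat \<Rightarrow> nat \<Rightarrow> inst \<Rightarrow> real" where
  "OPT m n c = Min {makespan m c X | X. is_allocation m n X}"

definition is_mechanism ::
  "nat \<Rightarrow> nat \<Rightarrow> (inst \<Rightarrow> nat \<Rightarrow> nat set) \<Rightarrow> (inst \<Rightarrow> nat \<Rightarrow> real) \<Rightarrow> bool" where
  "is_mechanism m n A p \<longleftrightarrow> (\<forall>c. is_instance m n c \<longrightarrow> is_allocation m n (A c))"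

definition proportional ::
  "nat \<Rightarrow> nat \<Rightarrow> (inst \<Rightarrow> nat \<Rightarrow> nat set) \<Rightarrow> (inst \<Rightarrow> nat \<Rightarrow> real) \<Rightarrow> bool" where
  "proportional m n A p \<longleftrightarrow>
     (\<forall>c. is_instance m n c \<longrightarrow> (\<forall>i<m.
        cost c i (A c i) - p c i \<le> (1 / real m) * (\<Sum>j<m. cost c i (A c j) - p c j)))"

definition approx ::
  "nat \<Rightarrow> nat \<Rightarrow> real \<Rightarrow> (inst \<Rightarrow> nat \<Rightarrow> nat set) \<Rightarrow> bool" where
  "approx m n \<beta> A \<longleftrightarrow>
     (\<forall>c. is_instance m n c \<longrightarrow> makespan m c (A c) \<le> \<beta> * OPT m n c)"

end

theory Submission
  imports Defs "HOL-Library.FuncSet"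
begin

lemma pair_split:
  fixes a b :: "nat \<Rightarrow> real" and P Q :: "nat set" and M :: real
  assumes fin: "finite P" "finite Q" and dis: "P \<inter> Q = {}"
   and na: "\<forall>j\<in>P\<union>Q. 0 \<le> a j" and nb: "\<forall>j\<in>P\<union>Q. 0 \<le> b j"
   and lP: "sum a P \<le> M" and lQ: "sum b Q \<le> M"
  shows "\<exists>U. U \<subseteq> P \<union> Q \<and> sum a U \<le> 3/2*M \<and> sum b (P\<union>Q-U) \<le> 3/2*M \<and>
     sum a U + sum b (P\<union>Q-U) \<le> sum a Q + sum b P"
proof -
  have aP0: "0 \<le> sum a P" using na by (intro sum_nonneg) auto
  have bQ0: "0 \<le> sum b Q" using nb by (intro sum_nonneg) auto
  have bP0: "0 \<le> sum b P" using nb by (intro sum_nonneg) auto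
  have aQ0: "0 \<le> sum a Q" using na by (intro sum_nonneg) auto
  have M0: "0 \<le> M" using aP0 lP by linarith
  show ?thesis
  proof (cases "sum a P + sum b Q \<le> sum a Q + sum b P")
    case True
    have "P \<union> Q - P = Q" using dis by auto
    then show ?thesis using True lP lQ M0 by (intro exI[of _ P]) auto
  next
    case False
    show ?thesis
    proof (cases "sum a Q \<le> 3/2*M \<and> sum b P \<le> 3/2*M")
      case True
      have "P \<union> Q - Q = P" using dis by auto
      then show ?thesis using True by (intro exI[of _ Q]) auto
    next
      case F2: False
      show ?thesis
      proof (cases "sum a Q > 3/2*M")
        case True
        have bPs: "sum b P < M/2" using False True lP lQ by linarith
        define U where "U = {j\<in>Q. a j < b j}"
        define R where "R = {j\<in>Q. \<not> a j < b j}"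
        have QUR: "Q = U \<union> R" "U \<inter> R = {}" unfolding U_def R_def by auto
        have fU: "finite U" "finite R" using fin unfolding U_def R_def by auto
        have sQa: "sum a Q = sum a U + sum a R" using QUR fU by (simp add: sum.union_disjoint)
        have sQb: "sum b Q = sum b U + sum b R" using QUR fU by (simp add: sum.union_disjoint)
        have aUb: "sum a U \<le> sum b U" unfolding U_def by (rule sum_mono) auto
        have bRa: "sum b R \<le> sum a R" unfolding R_def by (rule sum_mono) auto
        have bU0: "0 \<le> sum b U" using nb unfolding U_def by (intro sum_nonneg) auto
        have bR0: "0 \<le> sum b R" using nb unfolding R_def by (intro sum_nonneg) auto
        have comp: "P \<union> Q - U = P \<union> R" "P \<inter> R = {}" using dis QUR unfolding U_def R_def by auto
        have sc: "sum b (P \<union> Q - U) = sum b P + sum b R" using comp fin fU by (simp add: sum.union_disjoint)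
        show ?thesis
          apply (intro exI[of _ U])
          using sc sQa sQb aUb bRa bU0 bR0 lQ bPs QUR by auto
      next
        case F3: False
        have bPl: "sum b P > 3/2*M" using F2 F3 by linarith
        have aQs: "sum a Q < M/2" using False bPl lP lQ by linarith
        define V where "V = {j\<in>P. b j < a j}"
        define R where "R = {j\<in>P. \<not> b j < a j}"
        have PVR: "P = V \<union> R" "V \<inter> R = {}" unfolding V_def R_def by auto
        have fV: "finite V" "finite R" using fin unfolding V_def R_def by auto
        have sPa: "sum a P = sum a V + sum a R" using PVR fV by (simp add: sum.union_disjoint)
        have sPb: "sum b P = sum b V + sum b R" using PVR fV by (simp add: sum.union_disjoint)
        have bVa: "sum b V \<le> sum a V" unfolding V_def by (rule sum_mono) auto
        have aRb: "sum a R \<le> sum b R" unfolding R_def by (rule sum_mono) auto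
        have aV0: "0 \<le> sum a V" using na unfolding V_def by (intro sum_nonneg) auto
        have aR0: "0 \<le> sum a R" using na unfolding R_def by (intro sum_nonneg) auto
        have comp: "P \<union> Q - (Q \<union> R) = V" "Q \<inter> R = {}" "Q \<union> R \<subseteq> P \<union> Q"
          using dis PVR unfolding V_def R_def by auto
        have sc: "sum a (Q \<union> R) = sum a Q + sum a R" using comp fin fV by (simp add: sum.union_disjoint)
        show ?thesis
          apply (intro exI[of _ "Q \<union> R"])
          using sc comp sPa sPb bVa aRb aV0 aR0 lP aQs by auto
      qed
    qed
  qed
qed


definition tau :: "nat \<Rightarrow> nat \<Rightarrow> nat \<Rightarrow> nat" where "tau m k i = (k + m - i) mod m"

lemma tau_lt: "0 < m \<Longrightarrow> tau m k i < m" by (simp add: tau_def)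

lemma tau_int: "i \<le> m \<Longrightarrow> int (tau m k i) = (int k - int i) mod int m"
proof -
  assume "i \<le> m"
  then have "int (k + m - i) = (int k - int i) + int m" by simp
  then show ?thesis unfolding tau_def by (simp add: zmod_int)
qed

lemma tau_inv: "i < m \<Longrightarrow> tau m k (tau m k i) = i"
proof -
  assume im: "i < m"
  have t: "tau m k i \<le> m" unfolding tau_def using im by simp
  have "int (tau m k (tau m k i)) = (int k - (int k - int i) mod int m) mod int m"
    using tau_int[OF t] tau_int[of i m k] im by simp
  also have "\<dots> = (int k - (int k - int i)) mod int m" by (rule mod_diff_right_eq)
  also have "\<dots> = int i mod int m" by simp
  also have "\<dots> = int i" using im by simp
  finally show ?thesis by simp
qed

lemma tau_inj: "i < m \<Longrightarrow> inj_on (\<lambda>k. tau m k i) {..<m}"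
proof (rule inj_onI)
  fix k k' assume im: "i < m" and k: "k \<in> {..<m}" "k' \<in> {..<m}" and e: "tau m k i = tau m k' i"
  have "(int k - int i) mod int m = (int k' - int i) mod int m" using e tau_int[of i m] im
    by (metis less_imp_le)
  then have "int k mod int m = int k' mod int m"
    by (metis add.commute diff_add_cancel mod_add_left_eq)
  then show "k = k'" using k by simp
qed

lemma construct:
  fixes c :: "nat \<Rightarrow> nat \<Rightarrow> real" and X :: "nat \<Rightarrow> nat set" and t :: "nat \<Rightarrow> nat"
  assumes sub: "\<forall>i<m. X i \<subseteq> {..<n}"
    and dis: "\<forall>i<m. \<forall>l<m. i \<noteq> l \<longrightarrow> X i \<inter> X l = {}"
    and un: "(\<Union>i<m. X i) = {..<n}"
    and nn: "\<forall>i<m. \<forall>j<n. 0 \<le> c i j"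
    and ld: "\<forall>i<m. sum (c i) (X i) \<le> M"
    and tt: "\<forall>i<m. t i < m \<and> t (t i) = i"
  shows "\<exists>A. (\<forall>i<m. \<forall>k<m. i \<noteq> k \<longrightarrow> A i \<inter> A k = {}) \<and> (\<Union>i<m. A i) = {..<n} \<and>
     (\<forall>i<m. sum (c i) (A i) \<le> 3/2*M) \<and>
     (\<Sum>i<m. sum (c i) (A i)) \<le> (\<Sum>i<m. sum (c i) (X (t i)))"
proof -
  have tL: "\<And>i. i < m \<Longrightarrow> t i < m" and tI: "\<And>i. i < m \<Longrightarrow> t (t i) = i" using tt by auto
  have dis': "\<And>a b. a<m \<Longrightarrow> b<m \<Longrightarrow> a\<noteq>b \<Longrightarrow> X a \<inter> X b = {}" using dis by blast
  define props where "props i l U \<longleftrightarrow> U \<subseteq> X i \<union> X l \<and> sum (c i) U \<le> 3/2*M \<and>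
     sum (c l) (X i \<union> X l - U) \<le> 3/2*M \<and>
     sum (c i) U + sum (c l) (X i \<union> X l - U) \<le> sum (c i) (X l) + sum (c l) (X i)" for i l U
  define U where "U i l = (SOME U. props i l U)" for i l
  have nnX: "\<And>i l j. i<m \<Longrightarrow> l<m \<Longrightarrow> j \<in> X l \<Longrightarrow> 0 \<le> c i j" using sub nn by blast
  have Up: "props i l (U i l)" if "i < m" "l < m" "i \<noteq> l" for i l
  proof -
    have "\<exists>V. props i l V"
      unfolding props_def
      apply (rule pair_split)
      using that sub dis ld nnX by (auto intro: finite_subset)
    then show ?thesis unfolding U_def by (rule someI_ex)
  qed
  define A where "A i = (if t i = i then X i else if i < t i then U i (t i) else X (t i) \<union> X i - U (t i) i)" for i
  have key: "A i \<subseteq> X i \<union> X (t i) \<and> A i \<union> A (t i) = X i \<union> X (t i) \<and>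
     (t i \<noteq> i \<longrightarrow> A i \<inter> A (t i) = {}) \<and> sum (c i) (A i) \<le> 3/2*M \<and>
     sum (c i) (A i) + sum (c (t i)) (A (t i)) \<le> sum (c i) (X (t i)) + sum (c (t i)) (X i)"
    if im: "i < m" for i
  proof -
    have ldi: "sum (c i) (X i) \<le> M" using ld im by blast
    have M0: "0 \<le> M"
    proof -
      have "0 \<le> sum (c i) (X i)" using nnX[OF im im] by (intro sum_nonneg) blast
      then show ?thesis using ldi by linarith
    qed
    have tim: "t i < m" and tti: "t (t i) = i" using tt im by auto
    show ?thesis
    proof (cases "t i = i")
      case True
      have "A i = X i" using True unfolding A_def by simp
      then show ?thesis using True ldi M0 by simp
    next
      case ne: False
      show ?thesis
      proof (cases "i < t i")
        case True
        have Ai: "A i = U i (t i)" using True ne unfolding A_def by auto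
        have At: "A (t i) = X i \<union> X (t i) - U i (t i)" using True ne tti unfolding A_def by auto
        have p: "props i (t i) (U i (t i))" using Up im tim ne by auto
        have p1: "U i (t i) \<subseteq> X i \<union> X (t i)" and p2: "sum (c i) (U i (t i)) \<le> 3/2*M"
          and p4: "sum (c i) (U i (t i)) + sum (c (t i)) (X i \<union> X (t i) - U i (t i)) \<le> sum (c i) (X (t i)) + sum (c (t i)) (X i)"
          using p unfolding props_def by blast+
        have s1: "A i \<union> A (t i) = X i \<union> X (t i)" unfolding Ai At using p1 by blast
        have s2: "A i \<inter> A (t i) = {}" unfolding Ai At by blast
        have s3: "A i \<subseteq> X i \<union> X (t i)" unfolding Ai using p1 .
        have s5: "sum (c i) (A i) \<le> 3/2*M" unfolding Ai using p2 .
        have s4: "sum (c i) (A i) + sum (c (t i)) (A (t i)) \<le> sum (c i) (X (t i)) + sum (c (t i)) (X i)"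
          unfolding Ai At using p4 .
        show ?thesis by (intro conjI impI s1 s2 s3 s4 s5)
      next
        case False
        have Ai: "A i = X (t i) \<union> X i - U (t i) i" using False ne unfolding A_def by auto
        have At: "A (t i) = U (t i) i" using False ne tti unfolding A_def by auto
        have p: "props (t i) i (U (t i) i)" using Up im tim ne by auto
        have p1: "U (t i) i \<subseteq> X (t i) \<union> X i" and p3: "sum (c i) (X (t i) \<union> X i - U (t i) i) \<le> 3/2*M"
          and p4: "sum (c (t i)) (U (t i) i) + sum (c i) (X (t i) \<union> X i - U (t i) i) \<le> sum (c (t i)) (X i) + sum (c i) (X (t i))"
          using p unfolding props_def by blast+
        have s1: "A i \<union> A (t i) = X i \<union> X (t i)" unfolding Ai At using p1 by blast
        have s2: "A i \<inter> A (t i) = {}" unfolding Ai At by blast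
        have s3: "A i \<subseteq> X i \<union> X (t i)" unfolding Ai by blast
        have s4: "sum (c i) (A i) + sum (c (t i)) (A (t i)) \<le> sum (c i) (X (t i)) + sum (c (t i)) (X i)"
          using p4 unfolding Ai At by linarith
        have s5: "sum (c i) (A i) \<le> 3/2*M" unfolding Ai using p3 .
        show ?thesis by (intro conjI impI s1 s2 s3 s4 s5)
      qed
    qed
  qed
  have bij: "bij_betw t {..<m} {..<m}"
  proof (rule bij_betw_imageI)
    show "inj_on t {..<m}"
    proof (rule inj_onI)
      fix x y assume xy: "x \<in> {..<m}" "y \<in> {..<m}" "t x = t y"
      then have "t (t x) = t (t y)" by simp
      then show "x = y" using xy(1,2) tI by simp
    qed
    show "t ` {..<m} = {..<m}"
    proof
      show "t ` {..<m} \<subseteq> {..<m}" using tL by auto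
      show "{..<m} \<subseteq> t ` {..<m}"
      proof
        fix i assume i: "i \<in> {..<m}"
        then have "i = t (t i)" "t i \<in> {..<m}" using tI tL by auto
        then show "i \<in> t ` {..<m}" by blast
      qed
    qed
  qed
  have disA: "\<forall>i<m. \<forall>k<m. i \<noteq> k \<longrightarrow> A i \<inter> A k = {}"
  proof (intro allI impI)
    fix i k assume ik: "i < m" "k < m" "i \<noteq> k"
    show "A i \<inter> A k = {}"
    proof (cases "k = t i")
      case True
      then show ?thesis using key[OF ik(1)] ik by auto
    next
      case False
      have nk1: "t k \<noteq> i" using False tI ik by auto
      have nk2: "t k \<noteq> t i"
      proof
        assume "t k = t i" then have "t (t k) = t (t i)" by simp
        then show False using tI ik by simp
      qed
      have til: "t i < m" "t k < m" using tL ik by auto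
      have e1: "X i \<inter> X k = {}" apply (rule dis') using ik by auto
      have e2: "X i \<inter> X (t k) = {}" apply (rule dis') using ik til nk1 nk2 by auto
      have e3: "X (t i) \<inter> X k = {}" apply (rule dis') using ik til False by auto
      have e4: "X (t i) \<inter> X (t k) = {}" apply (rule dis') using ik til nk1 nk2 by auto
      have "(X i \<union> X (t i)) \<inter> (X k \<union> X (t k)) = {}" using e1 e2 e3 e4 by blast
      then show ?thesis using key[OF ik(1)] key[OF ik(2)] by blast
    qed
  qed
  have unA: "(\<Union>i<m. A i) = {..<n}"
  proof
    show "(\<Union>i<m. A i) \<subseteq> {..<n}"
    proof (rule UN_least)
      fix i assume i: "i \<in> {..<m}"
      then have "A i \<subseteq> X i \<union> X (t i)" using key by auto
      moreover have "X i \<subseteq> {..<n}" "X (t i) \<subseteq> {..<n}" using sub i tL by auto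
      ultimately show "A i \<subseteq> {..<n}" by blast
    qed
    show "{..<n} \<subseteq> (\<Union>i<m. A i)"
    proof
      fix j assume "j \<in> {..<n}"
      then obtain l where l: "l < m" "j \<in> X l" using un by auto
      then have "j \<in> A l \<union> A (t l)" using key[OF l(1)] by auto
      then show "j \<in> (\<Union>i<m. A i)" using l tL[of l] by blast
    qed
  qed
  have s1: "(\<Sum>i<m. sum (c (t i)) (A (t i))) = (\<Sum>i<m. sum (c i) (A i))"
    by (rule sum.reindex_bij_betw[OF bij])
  have s2: "(\<Sum>i<m. sum (c (t i)) (X i)) = (\<Sum>i<m. sum (c i) (X (t i)))"
  proof -
    have "(\<Sum>i<m. sum (c (t i)) (X i)) = (\<Sum>i<m. (\<lambda>i. sum (c i) (X (t i))) (t i))"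
      by (rule sum.cong) (simp_all add: tI)
    also have "\<dots> = (\<Sum>i<m. sum (c i) (X (t i)))" by (rule sum.reindex_bij_betw[OF bij])
    finally show ?thesis .
  qed
  have "(\<Sum>i<m. sum (c i) (A i) + sum (c (t i)) (A (t i))) \<le> (\<Sum>i<m. sum (c i) (X (t i)) + sum (c (t i)) (X i))"
    using key by (intro sum_mono) auto
  then have "(\<Sum>i<m. sum (c i) (A i)) \<le> (\<Sum>i<m. sum (c i) (X (t i)))"
    using s1 s2 by (simp add: sum.distrib)
  moreover have "\<forall>i<m. sum (c i) (A i) \<le> 3/2*M" using key by blast
  ultimately show ?thesis using disA unA by blast
qed


lemma alloc_sum:
  assumes "is_allocation m n X"
  shows "cost c i {..<n} = (\<Sum>l<m. cost c i (X l))"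
proof -
  have un: "(\<Union>l<m. X l) = {..<n}" and dis: "\<forall>l<m. \<forall>k<m. l \<noteq> k \<longrightarrow> X l \<inter> X k = {}"
    using assms unfolding is_allocation_def by auto
  have fin: "\<forall>l\<in>{..<m}. finite (X l)"
  proof
    fix l assume "l \<in> {..<m}"
    then have "X l \<subseteq> {..<n}" using un by blast
    then show "finite (X l)" by (rule finite_subset) simp
  qed
  have "sum (c i) (\<Union>l\<in>{..<m}. X l) = (\<Sum>l\<in>{..<m}. sum (c i) (X l))"
    by (rule sum.UNION_disjoint) (use fin dis in auto)
  then show ?thesis using un unfolding cost_def by simp
qed

lemma exists_opt:
  assumes m0: "0 < m"
  shows "\<exists>X. is_allocation m n X \<and> makespan m c X = OPT m n c"
proof -
  define S where "S = {makespan m c X | X. is_allocation m n X}"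
  have "S \<subseteq> (makespan m c) ` (PiE {..<m} (\<lambda>_. Pow {..<n}))"
  proof
    fix s assume "s \<in> S"
    then obtain X where X: "is_allocation m n X" "s = makespan m c X" unfolding S_def by blast
    have un: "(\<Union>l<m. X l) = {..<n}" using X(1) unfolding is_allocation_def by auto
    have mem: "restrict X {..<m} \<in> PiE {..<m} (\<lambda>_. Pow {..<n})"
      unfolding restrict_PiE_iff using un by blast
    have eq: "makespan m c X = makespan m c (restrict X {..<m})"
      unfolding makespan_def by (intro arg_cong[where f=Max] image_cong) auto
    show "s \<in> (makespan m c) ` (PiE {..<m} (\<lambda>_. Pow {..<n}))"
      unfolding X(2) eq by (rule imageI[OF mem])
  qed
  then have fin: "finite S" by (rule finite_subset) (intro finite_imageI finite_PiE; simp)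
  define X0 where "X0 = (\<lambda>i::nat. if i = 0 then {..<n} else ({}::nat set))"
  have "is_allocation m n X0" unfolding is_allocation_def X0_def using m0 by auto
  then have ne: "S \<noteq> {}" unfolding S_def by blast
  have "OPT m n c \<in> S" unfolding OPT_def S_def[symmetric] using fin ne by (rule Min_in)
  then show ?thesis unfolding S_def by auto
qed

lemma exists_k:
  fixes f :: "nat \<Rightarrow> real"
  assumes "0 < m" "(\<Sum>k<m. f k) = F"
  shows "\<exists>k<m. f k \<le> F / real m"
proof (rule ccontr)
  assume "\<not> ?thesis"
  then have "\<And>k. k \<in> {..<m} \<Longrightarrow> F / real m < f k" by auto
  then have "(\<Sum>k<m. F / real m) < (\<Sum>k<m. f k)"
    using assms(1) by (intro sum_strict_mono) auto
  then show False using assms by simp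
qed

lemma key_good:
  assumes m0: "0 < m" and inst: "is_instance m n c"
  shows "\<exists>A. is_allocation m n A \<and> (\<forall>i<m. cost c i (A i) \<le> 3/2 * OPT m n c) \<and>
     (\<Sum>i<m. cost c i (A i)) \<le> (\<Sum>i<m. cost c i {..<n}) / real m"
proof -
  obtain X where X: "is_allocation m n X" "makespan m c X = OPT m n c" using exists_opt[OF m0] by blast
  have un: "(\<Union>l<m. X l) = {..<n}" and dis: "\<forall>l<m. \<forall>k<m. l \<noteq> k \<longrightarrow> X l \<inter> X k = {}"
    using X(1) unfolding is_allocation_def by auto
  have sub: "\<forall>i<m. X i \<subseteq> {..<n}" using un by blast
  have nn: "\<forall>i<m. \<forall>j<n. 0 \<le> c i j" using inst unfolding is_instance_def by auto
  have ld: "\<forall>i<m. sum (c i) (X i) \<le> OPT m n c"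
  proof (intro allI impI)
    fix i assume "i < m"
    then have "cost c i (X i) \<le> makespan m c X" unfolding makespan_def by (intro Max_ge) auto
    then show "sum (c i) (X i) \<le> OPT m n c" using X(2) unfolding cost_def by simp
  qed
  define F where "F = (\<Sum>i<m. cost c i {..<n})"
  have sumk: "(\<Sum>k<m. \<Sum>i<m. cost c i (X (tau m k i))) = F"
  proof -
    have "(\<Sum>k<m. \<Sum>i<m. cost c i (X (tau m k i))) = (\<Sum>i<m. \<Sum>k<m. cost c i (X (tau m k i)))"
      by (rule sum.swap)
    also have "\<dots> = (\<Sum>i<m. \<Sum>l<m. cost c i (X l))"
    proof (rule sum.cong)
      fix i assume i: "i \<in> {..<m}"
      have bij: "bij_betw (\<lambda>k. tau m k i) {..<m} {..<m}"
      proof -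
        have inj: "inj_on (\<lambda>k. tau m k i) {..<m}" using tau_inj i by simp
        have "(\<lambda>k. tau m k i) ` {..<m} \<subseteq> {..<m}" using tau_lt m0 by auto
        then have "(\<lambda>k. tau m k i) ` {..<m} = {..<m}" using inj by (intro endo_inj_surj) auto
        then show ?thesis using inj unfolding bij_betw_def by simp
      qed
      show "(\<Sum>k<m. cost c i (X (tau m k i))) = (\<Sum>l<m. cost c i (X l))"
        by (rule sum.reindex_bij_betw[OF bij, of "\<lambda>l. cost c i (X l)"])
    qed simp
    also have "\<dots> = F" unfolding F_def using alloc_sum[OF X(1)] by simp
    finally show ?thesis .
  qed
  then obtain k where k: "k < m" "(\<Sum>i<m. cost c i (X (tau m k i))) \<le> F / real m"
    using exists_k[OF m0 sumk] by blast
  have tt: "\<forall>i<m. tau m k i < m \<and> tau m k (tau m k i) = i" using tau_lt tau_inv m0 by auto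
  obtain A where A: "\<forall>i<m. \<forall>k<m. i \<noteq> k \<longrightarrow> A i \<inter> A k = {}" "(\<Union>i<m. A i) = {..<n}"
     "\<forall>i<m. sum (c i) (A i) \<le> 3/2*OPT m n c"
     "(\<Sum>i<m. sum (c i) (A i)) \<le> (\<Sum>i<m. sum (c i) (X (tau m k i)))"
    using construct[OF sub dis un nn ld tt] by blast
  show ?thesis
    apply (intro exI[of _ A] conjI)
    using A k unfolding is_allocation_def cost_def F_def by auto
qed

theorem theorem1:
  fixes m n :: nat
  assumes "m \<ge> 2" and "n \<ge> 2"
  shows "\<exists>A p. is_mechanism m n A p \<and> proportional m n A p \<and> approx m n (3/2) A"
proof -
  have m0: "0 < m" using assms by simp
  define good where "good c A \<longleftrightarrow> is_allocation m n A \<and> (\<forall>i<m. cost c i (A i) \<le> 3/2 * OPT m n c) \<and>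
     (\<Sum>i<m. cost c i (A i)) \<le> (\<Sum>i<m. cost c i {..<n}) / real m" for c A
  define A where "A c = (SOME A. good c A)" for c
  define p where "p c i = cost c i (A c i) - cost c i {..<n} / real m" for c i
  have gA: "good c (A c)" if "is_instance m n c" for c
  proof -
    have "\<exists>A. good c A" using key_good[OF m0 that] unfolding good_def by simp
    then show ?thesis unfolding A_def by (rule someI_ex)
  qed
  have mech: "is_mechanism m n A p" unfolding is_mechanism_def using gA good_def by blast
  have propo: "proportional m n A p"
    unfolding proportional_def
  proof (intro allI impI)
    fix c i assume inst: "is_instance m n c" and i: "i < m"
    have g: "good c (A c)" using gA[OF inst] .
    have al: "is_allocation m n (A c)" and sm: "(\<Sum>i<m. cost c i (A c i)) \<le> (\<Sum>i<m. cost c i {..<n}) / real m"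
      using g unfolding good_def by auto
    have sp: "(\<Sum>j<m. p c j) \<le> 0"
    proof -
      have "(\<Sum>j<m. p c j) = (\<Sum>j<m. cost c j (A c j)) - (\<Sum>j<m. cost c j {..<n}) / real m"
        unfolding p_def by (simp add: sum_subtractf sum_divide_distrib)
      then show ?thesis using sm by simp
    qed
    have "(\<Sum>j<m. cost c i (A c j) - p c j) = cost c i {..<n} - (\<Sum>j<m. p c j)"
      using alloc_sum[OF al, of c i] by (simp add: sum_subtractf)
    then have "(1 / real m) * (\<Sum>j<m. cost c i (A c j) - p c j) \<ge> cost c i {..<n} / real m"
      using sp m0 by (simp add: divide_right_mono)
    moreover have "cost c i (A c i) - p c i = cost c i {..<n} / real m" unfolding p_def by simp
    ultimately show "cost c i (A c i) - p c i \<le> (1 / real m) * (\<Sum>j<m. cost c i (A c j) - p c j)" by simp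
  qed
  have appr: "approx m n (3/2) A"
    unfolding approx_def
  proof (intro allI impI)
    fix c assume inst: "is_instance m n c"
    then have "\<forall>i<m. cost c i (A c i) \<le> 3/2 * OPT m n c" using gA good_def by blast
    then show "makespan m c (A c) \<le> 3/2 * OPT m n c"
      unfolding makespan_def using m0 by (subst Max_le_iff) auto
  qed
  show ?thesis using mech propo appr by blast
qed

end
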